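(* Let $f\in H^{2s}(M)$ and $a,s>0$ satisfy $\|f\|\le a\|\Delta^sf\|$. Then for all $t\ge0$ and all $m=2^l$, $l=0,1,2,\dots$, such that $f\in H^{2(ms+t)}(M)$, $$\|\Delta^tf\|\le a^m\|\Delta^{ms+t}f\|.$$
   Context: $M$ is a compact orientable Riemannian manifold, $\Delta$ is its (nonnegative, self-adjoint) Laplace–Beltrami operator on $L_2(M)$, $\|\cdot\|$ is the $L_2(M)$-norm, powers $\Delta^t$, $t\ge0$, are defined by the spectral theorem, and $H^{s}(M)$ denotes the Sobolev space, equal to the domain of $\Delta^{s/2}$. *)

theory Defs
  imports "HOL-Analysis.Analysis"
begin

text \<open>Spectral model of the Laplace-Beltrami operator on a compact manifold:
  L2(M) has an orthonormal eigenbasis phi_k with eigenvalues lam k \<ge> 0.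
  A function f is represented by its coefficient sequence c (f = sum c_k phi_k).
  Powers Delta^t act by multiplication with lam k ^ t, with the convention
  Delta^0 = identity (so 0^0 = 1).\<close>

definition spow :: "real \<Rightarrow> real \<Rightarrow> real" where
  "spow x t = (if t = 0 then 1 else x powr t)"

text \<open>f belongs to the domain of Delta^t (i.e. to H^(2t)(M)).\<close>
definition in_dom :: "(nat \<Rightarrow> real) \<Rightarrow> (nat \<Rightarrow> complex) \<Rightarrow> real \<Rightarrow> bool" where
  "in_dom lam c t \<longleftrightarrow> summable (\<lambda>k. (spow (lam k) t)\<^sup>2 * (cmod (c k))\<^sup>2)"

definition lap_norm :: "(nat \<Rightarrow> real) \<Rightarrow> (nat \<Rightarrow> complex) \<Rightarrow> real \<Rightarrow> real" where
  "lap_norm lam c t = sqrt (\<Sum>k. (spow (lam k) t)\<^sup>2 * (cmod (c k))\<^sup>2)"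

end

theory Submission
  imports Defs
begin

lemma sq_powr: "(y::real) powr s * y powr s = y powr (2 * s)"
  by (metis mult_2 powr_add)

lemma powr_key: "(y::real) \<ge> 0 \<Longrightarrow> s > 0 \<Longrightarrow> ((y powr s)^2) powr (u/s) = (y powr u)^2"
proof -
  assume s: "s > 0"
  have "((y powr s)^2) powr (u/s) = (y powr (2 * s)) powr (u/s)"
    by (simp add: power2_eq_square sq_powr)
  also have "\<dots> = y powr (2 * u)" using s by (simp add: powr_powr)
  also have "\<dots> = (y powr u)^2" by (simp add: power2_eq_square sq_powr)
  finally show ?thesis .
qed

lemma spow_nonneg: "spow x t \<ge> 0"
  by (simp add: spow_def)

lemma spow_pos: "t \<noteq> 0 \<Longrightarrow> spow x t = x powr t"
  by (simp add: spow_def)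

lemma interp_pt:
  assumes x: "x \<ge> 0" and u: "0 \<le> u" "u \<le> v"
  shows "(spow x u)^2 \<le> 1 + (spow x v)^2"
proof (cases "u = 0")
  case True then show ?thesis by (simp add: spow_def)
next
  case False
  then have v: "v \<noteq> 0" "u > 0" using u by auto
  have "spow x u \<le> max 1 (spow x v)"
  proof (cases "x \<ge> 1")
    case True
    then have "x powr u \<le> x powr v" using u by (simp add: powr_mono)
    then show ?thesis using False v by (simp add: spow_def)
  next
    case F: False
    then have "x powr u \<le> 1" using x v
      by (intro powr_le1) auto
    then show ?thesis using False by (simp add: spow_def)
  qed
  then have "spow x u \<le> 1 \<or> spow x u \<le> spow x v" by linarith
  then show ?thesis
  proof
    assume "spow x u \<le> 1"
    then have "(spow x u)^2 \<le> 1"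
      by (simp add: spow_nonneg power_le_one)
    then show ?thesis by (smt (verit) zero_le_power2)
  next
    assume "spow x u \<le> spow x v"
    then have "(spow x u)^2 \<le> (spow x v)^2"
      by (simp add: spow_nonneg power_mono)
    then show ?thesis by linarith
  qed
qed

lemma interp:
  assumes lam: "\<forall>k. lam k \<ge> 0" and d0: "in_dom lam c 0" and dv: "in_dom lam c v"
    and u: "0 \<le> u" "u \<le> v"
  shows "in_dom lam c u"
  unfolding in_dom_def
proof (rule summable_comparison_test[where g = "\<lambda>k. (spow (lam k) 0)\<^sup>2 * (cmod (c k))\<^sup>2 + (spow (lam k) v)\<^sup>2 * (cmod (c k))\<^sup>2"])
  show "summable (\<lambda>k. (spow (lam k) 0)\<^sup>2 * (cmod (c k))\<^sup>2 + (spow (lam k) v)\<^sup>2 * (cmod (c k))\<^sup>2)"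
    using d0 dv unfolding in_dom_def by (rule summable_add)
  show "\<exists>N. \<forall>n\<ge>N. norm ((spow (lam n) u)\<^sup>2 * (cmod (c n))\<^sup>2)
      \<le> (spow (lam n) 0)\<^sup>2 * (cmod (c n))\<^sup>2 + (spow (lam n) v)\<^sup>2 * (cmod (c n))\<^sup>2"
  proof (intro exI allI impI)
    fix n
    have "(spow (lam n) u)\<^sup>2 \<le> 1 + (spow (lam n) v)\<^sup>2" using interp_pt lam u by blast
    then have "(spow (lam n) u)\<^sup>2 * (cmod (c n))\<^sup>2 \<le> (1 + (spow (lam n) v)\<^sup>2) * (cmod (c n))\<^sup>2"
      by (simp add: mult_right_mono)
    then show "norm ((spow (lam n) u)\<^sup>2 * (cmod (c n))\<^sup>2)
      \<le> (spow (lam n) 0)\<^sup>2 * (cmod (c n))\<^sup>2 + (spow (lam n) v)\<^sup>2 * (cmod (c n))\<^sup>2"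
      by (simp add: spow_def algebra_simps)
  qed
qed

lemma step:
  fixes lam :: "nat \<Rightarrow> real" and c :: "nat \<Rightarrow> complex" and a s u :: real
  assumes lam: "\<forall>k. lam k \<ge> 0"
    and d0: "in_dom lam c 0" and ds: "in_dom lam c s"
    and a: "a > 0" and s: "s > 0"
    and hyp: "lap_norm lam c 0 \<le> a * lap_norm lam c s"
    and u: "u \<ge> 0" and dus: "in_dom lam c (u + s)"
  shows "lap_norm lam c u \<le> a * lap_norm lam c (u + s)"
proof (cases "u = 0")
  case True then show ?thesis using hyp by simp
next
  case False
  then have up: "u > 0" using u by auto
  define w where "w k = (cmod (c k))\<^sup>2" for k
  define x where "x k = (spow (lam k) s)\<^sup>2" for k
  define e where "e k = (spow (lam k) u)\<^sup>2" for k
  have du: "in_dom lam c u" using interp[OF lam d0 dus] u s by simp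
  have w0: "w k \<ge> 0" for k by (simp add: w_def)
  have sp0: "(spow (lam k) 0)\<^sup>2 = 1" for k by (simp add: spow_def)
  have xe: "(spow (lam k) (u+s))\<^sup>2 = x k * e k" for k
    using up s by (simp add: x_def e_def spow_def powr_add power_mult_distrib algebra_simps)
  define S0 where "S0 = (\<Sum>k. w k)"
  define Ss where "Ss = (\<Sum>k. x k * w k)"
  define Su where "Su = (\<Sum>k. e k * w k)"
  define Ssu where "Ssu = (\<Sum>k. x k * e k * w k)"
  have sum0: "summable w" using d0 unfolding in_dom_def w_def by (simp add: sp0)
  have sums: "summable (\<lambda>k. x k * w k)" using ds unfolding in_dom_def w_def x_def .
  have sumu: "summable (\<lambda>k. e k * w k)" using du unfolding in_dom_def w_def e_def .
  have sumsu: "summable (\<lambda>k. x k * e k * w k)" using dus unfolding in_dom_def w_def xe .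
  have N0: "lap_norm lam c 0 = sqrt S0" unfolding lap_norm_def S0_def w_def by (simp add: sp0)
  have Ns: "lap_norm lam c s = sqrt Ss" unfolding lap_norm_def Ss_def w_def x_def ..
  have Nu: "lap_norm lam c u = sqrt Su" unfolding lap_norm_def Su_def w_def e_def ..
  have Nsu: "lap_norm lam c (u+s) = sqrt Ssu" unfolding lap_norm_def Ssu_def w_def xe ..
  have x0: "x k \<ge> 0" for k by (simp add: x_def)
  have e0: "e k \<ge> 0" for k by (simp add: e_def)
  have S00: "S0 \<ge> 0" unfolding S0_def using sum0 w0 by (simp add: suminf_nonneg)
  have Su0: "Su \<ge> 0" unfolding Su_def using sumu w0 e0 by (simp add: suminf_nonneg)
  have Ssu0: "Ssu \<ge> 0" unfolding Ssu_def using sumsu w0 e0 x0 by (simp add: suminf_nonneg)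
  show ?thesis
  proof (cases "S0 = 0")
    case True
    then have "\<forall>k. w k = 0" using suminf_eq_zero_iff[OF sum0] w0 unfolding S0_def by blast
    then have "Su = 0" unfolding Su_def by simp
    then show ?thesis using Nu Nsu a Ssu0 by simp
  next
    case False
    then have S0p: "S0 > 0" using S00 by simp
    define m where "m = Ss / S0"
    define \<mu> where "\<mu> = m powr (u/s)"
    have "S0 \<le> a^2 * Ss"
    proof -
      have "sqrt S0 \<le> a * sqrt Ss" using hyp N0 Ns by simp
      then have "(sqrt S0)^2 \<le> (a * sqrt Ss)^2" by (rule power_mono) (simp_all add: S00)
      moreover have "Ss \<ge> 0" unfolding Ss_def using sums w0 x0 by (simp add: suminf_nonneg)
      ultimately show ?thesis using S00 by (simp add: power_mult_distrib)
    qed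
    then have am: "1 \<le> a^2 * m" using S0p unfolding m_def by (simp add: field_simps)
    have m0: "m \<ge> 0" unfolding m_def using S0p
      by (simp add: Ss_def sums w0 x0 suminf_nonneg)
    have pt: "(x k - m) * (e k - \<mu>) \<ge> 0" for k
    proof -
      have ex: "e k = (x k) powr (u/s)"
        using powr_key[of "lam k" s u] lam s up by (simp add: spow_def x_def e_def)
      show ?thesis
      proof (cases "x k \<ge> m")
        case True
        then have "e k \<ge> \<mu>" unfolding ex \<mu>_def using m0 up s
          by (simp add: powr_mono2)
        then show ?thesis using True by simp
      next
        case F: False
        then have "e k \<le> \<mu>" unfolding ex \<mu>_def using m0 up s x0[of k]
          by (simp add: powr_mono2)
        then show ?thesis using F by (simp add: mult_nonpos_nonpos)
      qed
    qed
    have "(\<lambda>k. x k * e k * w k - m * (e k * w k) - \<mu> * (x k * w k) + m * \<mu> * w k)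
       sums (Ssu - m * Su - \<mu> * Ss + m * \<mu> * S0)"
      unfolding Ssu_def Su_def Ss_def S0_def
      by (intro sums_add sums_diff sums_mult summable_sums sum0 sums sumu sumsu)
    moreover have "(\<lambda>k. x k * e k * w k - m * (e k * w k) - \<mu> * (x k * w k) + m * \<mu> * w k)
       = (\<lambda>k. (x k - m) * (e k - \<mu>) * w k)" by (auto simp: algebra_simps)
    ultimately have sm: "(\<lambda>k. (x k - m) * (e k - \<mu>) * w k) sums (Ssu - m * Su - \<mu> * Ss + m * \<mu> * S0)"
      by simp
    have nn: "\<And>k. (x k - m) * (e k - \<mu>) * w k \<ge> 0" using pt w0 by simp
    have "Ssu - m * Su - \<mu> * Ss + m * \<mu> * S0 = (\<Sum>k. (x k - m) * (e k - \<mu>) * w k)"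
      using sm by (rule sums_unique)
    also have "\<dots> \<ge> 0" using sums_summable[OF sm] nn by (rule suminf_nonneg)
    finally have "Ssu - m * Su - \<mu> * Ss + m * \<mu> * S0 \<ge> 0" .
    moreover have "m * S0 = Ss" unfolding m_def using S0p by simp
    moreover have "\<mu> * Ss = m * \<mu> * S0" using calculation(2) by (simp add: algebra_simps)
    ultimately have "Ssu \<ge> m * Su" by linarith
    then have "Su \<le> a^2 * Ssu"
    proof -
      have "Su = 1 * Su" by simp
      also have "\<dots> \<le> (a^2 * m) * Su" by (rule mult_right_mono[OF am Su0])
      also have "\<dots> = a^2 * (m * Su)" by simp
      also have "\<dots> \<le> a^2 * Ssu" using \<open>Ssu \<ge> m * Su\<close> by (rule mult_left_mono) simp
      finally show ?thesis .
    qed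
    then have "sqrt Su \<le> sqrt (a^2 * Ssu)" by simp
    also have "\<dots> = a * sqrt Ssu" using a by (simp add: real_sqrt_mult)
    finally show ?thesis using Nu Nsu by simp
  qed
qed

theorem lemma1p6:
  fixes lam :: "nat \<Rightarrow> real" and c :: "nat \<Rightarrow> complex"
    and a s t :: real and l :: nat
  assumes lam_nonneg: "\<forall>k. lam k \<ge> 0"
    and L2: "in_dom lam c 0"
    and H2s: "in_dom lam c s"
    and a_pos: "a > 0" and s_pos: "s > 0"
    and hyp: "lap_norm lam c 0 \<le> a * lap_norm lam c s"
    and t_nonneg: "t \<ge> 0"
    and Hm: "in_dom lam c (real (2 ^ l) * s + t)"
  shows "lap_norm lam c t \<le> a ^ (2 ^ l) * lap_norm lam c (real (2 ^ l) * s + t)"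
proof -
  define M :: nat where "M = 2 ^ l"
  have *: "j \<le> M \<Longrightarrow> lap_norm lam c t \<le> a ^ j * lap_norm lam c (real j * s + t)" for j
  proof (induction j)
    case 0 then show ?case by simp
  next
    case (Suc j)
    then have IH: "lap_norm lam c t \<le> a ^ j * lap_norm lam c (real j * s + t)" by simp
    have "real (Suc j) \<le> real M" using Suc.prems by linarith
    then have "real (Suc j) * s \<le> real M * s" using s_pos by (simp add: mult_right_mono)
    then have "in_dom lam c (real (Suc j) * s + t)"
      using interp[OF lam_nonneg L2 Hm] s_pos t_nonneg unfolding M_def
      by simp
    then have "in_dom lam c (real j * s + t + s)" by (simp add: algebra_simps)
    moreover have "real j * s + t \<ge> 0" using s_pos t_nonneg by simp
    ultimately have "lap_norm lam c (real j * s + t) \<le> a * lap_norm lam c (real j * s + t + s)"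
      using step[OF lam_nonneg L2 H2s a_pos s_pos hyp] by blast
    moreover have "real j * s + t + s = real (Suc j) * s + t" by (simp add: algebra_simps)
    ultimately have "a ^ j * lap_norm lam c (real j * s + t) \<le> a ^ Suc j * lap_norm lam c (real (Suc j) * s + t)"
      using a_pos by (simp add: mult_left_mono)
    then show ?case using IH by linarith
  qed
  have "lap_norm lam c t \<le> a ^ M * lap_norm lam c (real M * s + t)" using *[of M] by simp
  then show ?thesis unfolding M_def .
qed

end
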